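(* Let $\Lambda^*$ be a factorial language in $(\mathbb F_+^d)^N$. If $\Lambda^*$ is sofic, then $\Lambda^*$ coincides with the labeled path space $\{\mathfrak L(\lambda):\lambda\in\Lambda\}$ of its follower set graph $(\Lambda,\mathfrak L)$. Conversely, if $\Lambda^*$ coincides with the labeled path space of a labeled higher rank $N$-graph with finitely many vertices, then $\Lambda^*$ is sofic.
   Context: $\mathbb F_+^d$ is the free semigroup (words) on letters $[d]=\{1,\dots,d\}$ with empty word $\emptyset$. In $(\mathbb F_+^d)^N$: $\underline\mu*\underline\nu=(\mu_1\nu_1,\dots,\mu_N\nu_N)$; $|\underline\mu|=(|\mu_1|,\dots,|\mu_N|)\in\mathbb Z_+^N$; $\delta_i(k)$ is the element with the one-letter word $k$ in coordinate $i$ and $\emptyset$ elsewhere; $\underline\nu$ is a subword of $\underline\mu$ if $\underline\mu=\underline w*\underline\nu*\underline q$. A factorial language (FL) is $\Lambda^*\subseteq(\mathbb F_+^d)^N$ such that for every $i\in[N]$ some $\delta_i(k)\in\Lambda^*$, and subwords of elements of $\Lambda^*$ lie in $\Lambda^*$. For $\underline n\in\mathbb Z_+^N$, $\underline\mu\sim_{\underline n}\underline\nu$ iff $\{\underline w:\underline w*\underline\mu\in\Lambda^*,|\underline w|\le\underline n\}=\{\underline w:\underline w*\underline\nu\in\Lambda^*,|\underline w|\le\underline n\}$, and $\underline\mu\sim\underline\nu$ iff $\{\underline w:\underline w*\underline\mu\in\Lambda^*\}=\{\underline w:\underline w*\underline\nu\in\Lambda^*\}$ (on $\Lambda^*$);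 $\Omega=\Lambda^*/\sim$. $\Lambda^*$ is sofic if there is $\underline m$ with $\sim_{\underline n}=\sim$ for all $\underline n\ge\underline m$ (equivalently $\Omega$ finite). A higher rank $N$-graph: a countable small category $\Lambda$ with functor $d:\Lambda\to\mathbb Z_+^N$ with unique factorization (for $d(\lambda)=\underline m+\underline n$ unique $\lambda=\mu\nu$ with $d(\mu)=\underline m,d(\nu)=\underline n$); paths compose right to left, $\lambda\mu$ defined when $s(\lambda)=r(\mu)$. A labeled higher rank $N$-graph $(\Lambda,\mathfrak L)$: $\Lambda$ arises as the path category of a directed graph with edge set $E=E_1\cup\dots\cup E_N$ (colours) modulo an equivalence on paths, with $d$ counting edges of each colour; $\mathfrak L:E\to(\mathbb F_+^d)^N$ with $\mathfrak L(e)\in\{\delta_i(k):k\in[d]\}$ for $e\in E_i$, extended to paths by $\mathfrak L(e_1\cdots e_n)=\mathfrak L(e_1)*\cdots*\mathfrak L(e_n)$ (vertices labeled by $(\emptyset,\dots,\emptyset)$), and compatible with the equivalence, so $\mathfrak L$ is well-defined on $\Lambda$ with $|\mathfrak L(\lambda)|=d(\lambda)$. Its labeled path space is $\mathfrak L(\Lambda)$. The follower set graph of a sofic $\Lambda^*$: vertex set $\Omega$; for each $[\underline\mu]\in\Omega$ and $(i,k)$ with $\delta_i(k)*\underline\mu\in\Lambda^*$ an edge of colour $i$ labeled $\delta_i(k)$ with source $[\underline\mu]$ and range $[\delta_i(k)*\underline\mu]$; $\Lambda$ is the path category modulo the equivalence generated by $ef\sim f'e'$ whenever $\mathfrak L(e)*\mathfrak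 L(f)=\mathfrak L(f')*\mathfrak L(e')$ (this gives a labeled higher rank $N$-graph). *)

theory Defs
  imports Main "HOL-Library.Countable_Set"
begin

text \<open>An element of (F_+^d)^N is a function from coordinates to words (lists of letters),
  with letters in {1..d} in coordinates i < N and the empty word in coordinates i >= N.
  Coordinates are indexed 0..N-1.\<close>

type_synonym tword = "nat \<Rightarrow> nat list"

definition tuples :: "nat \<Rightarrow> nat \<Rightarrow> tword set" where
  "tuples d N = {\<mu>. (\<forall>i<N. set (\<mu> i) \<subseteq> {1..d}) \<and> (\<forall>i\<ge>N. \<mu> i = [])}"

definition tmul :: "tword \<Rightarrow> tword \<Rightarrow> tword" where
  "tmul \<mu> \<nu> = (\<lambda>i. \<mu> i @ \<nu> i)"

definition tempty :: tword where
  "tempty = (\<lambda>i. [])"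

definition tlen :: "tword \<Rightarrow> nat \<Rightarrow> nat" where
  "tlen \<mu> = (\<lambda>i. length (\<mu> i))"

definition delta :: "nat \<Rightarrow> nat \<Rightarrow> tword" where
  "delta i k = (\<lambda>j. if j = i then [k] else [])"

definition subword :: "nat \<Rightarrow> nat \<Rightarrow> tword \<Rightarrow> tword \<Rightarrow> bool" where
  "subword d N \<nu> \<mu> \<longleftrightarrow> (\<exists>w\<in>tuples d N. \<exists>q\<in>tuples d N. \<mu> = tmul (tmul w \<nu>) q)"

definition factorial_language :: "nat \<Rightarrow> nat \<Rightarrow> tword set \<Rightarrow> bool" where
  "factorial_language d N L \<longleftrightarrow>
     L \<subseteq> tuples d N \<and>
     (\<forall>i<N. \<exists>k\<in>{1..d}. delta i k \<in> L) \<and>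
     (\<forall>\<mu>\<in>L. \<forall>\<nu>\<in>tuples d N. subword d N \<nu> \<mu> \<longrightarrow> \<nu> \<in> L)"

definition follower_n :: "nat \<Rightarrow> nat \<Rightarrow> tword set \<Rightarrow> (nat \<Rightarrow> nat) \<Rightarrow> tword \<Rightarrow> tword set" where
  "follower_n d N L n \<mu> = {w\<in>tuples d N. tmul w \<mu> \<in> L \<and> (\<forall>i<N. tlen w i \<le> n i)}"

definition follower :: "nat \<Rightarrow> nat \<Rightarrow> tword set \<Rightarrow> tword \<Rightarrow> tword set" where
  "follower d N L \<mu> = {w\<in>tuples d N. tmul w \<mu> \<in> L}"

definition sim_n :: "nat \<Rightarrow> nat \<Rightarrow> tword set \<Rightarrow> (nat \<Rightarrow> nat) \<Rightarrow> tword \<Rightarrow> tword \<Rightarrow> bool" where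
  "sim_n d N L n \<mu> \<nu> \<longleftrightarrow> follower_n d N L n \<mu> = follower_n d N L n \<nu>"

definition sim :: "nat \<Rightarrow> nat \<Rightarrow> tword set \<Rightarrow> tword \<Rightarrow> tword \<Rightarrow> bool" where
  "sim d N L \<mu> \<nu> \<longleftrightarrow> follower d N L \<mu> = follower d N L \<nu>"

definition sofic :: "nat \<Rightarrow> nat \<Rightarrow> tword set \<Rightarrow> bool" where
  "sofic d N L \<longleftrightarrow> (\<exists>m. \<forall>n. (\<forall>i<N. m i \<le> n i) \<longrightarrow>
       (\<forall>\<mu>\<in>L. \<forall>\<nu>\<in>L. sim_n d N L n \<mu> \<nu> \<longleftrightarrow> sim d N L \<mu> \<nu>))"

definition fclass :: "nat \<Rightarrow> nat \<Rightarrow> tword set \<Rightarrow> tword \<Rightarrow> tword set" where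
  "fclass d N L \<mu> = {\<nu>\<in>L. sim d N L \<nu> \<mu>}"

definition Omega :: "nat \<Rightarrow> nat \<Rightarrow> tword set \<Rightarrow> tword set set" where
  "Omega d N L = fclass d N L ` L"

text \<open>An edge is a tuple (range, colour i, letter k, source). For each class [mu] and (i,k)
  with delta i k * mu in L there is exactly one edge of colour i labelled delta i k,
  with source [mu] and range [delta i k * mu] (well defined by the definition of ~).\<close>
type_synonym fedge = "tword set \<times> nat \<times> nat \<times> tword set"

definition fsg_edge :: "nat \<Rightarrow> nat \<Rightarrow> tword set \<Rightarrow> fedge \<Rightarrow> bool" where
  "fsg_edge d N L e \<longleftrightarrow> (case e of (R, i, k, S) \<Rightarrow>
     i < N \<and> k \<in> {1..d} \<and>
     (\<exists>\<mu>\<in>L. S = fclass d N L \<mu> \<and> tmul (delta i k) \<mu> \<in> L \<and>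
              R = fclass d N L (tmul (delta i k) \<mu>)))"

definition esrc :: "fedge \<Rightarrow> tword set" where
  "esrc e = (case e of (R, i, k, S) \<Rightarrow> S)"

definition erng :: "fedge \<Rightarrow> tword set" where
  "erng e = (case e of (R, i, k, S) \<Rightarrow> R)"

definition elabel :: "fedge \<Rightarrow> tword" where
  "elabel e = (case e of (R, i, k, S) \<Rightarrow> delta i k)"

text \<open>A path e_1 e_2 ... e_n (composed right to left): s(e_j) = r(e_(j+1)).\<close>
definition fsg_path :: "nat \<Rightarrow> nat \<Rightarrow> tword set \<Rightarrow> fedge list \<Rightarrow> bool" where
  "fsg_path d N L es \<longleftrightarrow> (\<forall>e\<in>set es. fsg_edge d N L e) \<and>
     successively (\<lambda>e f. esrc e = erng f) es"

definition path_label :: "fedge list \<Rightarrow> tword" where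
  "path_label es = foldr (\<lambda>e acc. tmul (elabel e) acc) es tempty"

text \<open>The equivalence on paths preserves labels, so the labels of
  morphisms of the quotient category are exactly these.\<close>
definition fsg_labeled_path_space :: "nat \<Rightarrow> nat \<Rightarrow> tword set \<Rightarrow> tword set" where
  "fsg_labeled_path_space d N L =
     {path_label es | es. es \<noteq> [] \<and> fsg_path d N L es} \<union> (\<lambda>_. tempty) ` Omega d N L"

text \<open>A higher rank N-graph: a countable small category with morphism set Mor, object set V
  (objects identified with their identity morphisms), source/range maps, composition
  cmp x y (= x y, defined when src x = rng y), and degree functor deg into Z_+^N
  (functions nat => nat vanishing outside [N]) with unique factorization.\<close>
definition higher_rank_graph ::
  "nat \<Rightarrow> 'a set \<Rightarrow> 'a set \<Rightarrow> ('a \<Rightarrow> 'a) \<Rightarrow> ('a \<Rightarrow> 'a) \<Rightarrow> ('a \<Rightarrow> 'a \<Rightarrow> 'a)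
     \<Rightarrow> ('a \<Rightarrow> nat \<Rightarrow> nat) \<Rightarrow> bool" where
  "higher_rank_graph N Mor V src rng cmp deg \<longleftrightarrow>
     countable Mor \<and> V \<subseteq> Mor \<and>
     (\<forall>x\<in>Mor. src x \<in> V \<and> rng x \<in> V) \<and>
     (\<forall>v\<in>V. src v = v \<and> rng v = v) \<and>
     (\<forall>x\<in>Mor. \<forall>y\<in>Mor. src x = rng y \<longrightarrow>
        cmp x y \<in> Mor \<and> src (cmp x y) = src y \<and> rng (cmp x y) = rng x) \<and>
     (\<forall>x\<in>Mor. cmp (rng x) x = x \<and> cmp x (src x) = x) \<and>
     (\<forall>x\<in>Mor. \<forall>y\<in>Mor. \<forall>z\<in>Mor. src x = rng y \<longrightarrow> src y = rng z \<longrightarrow>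
        cmp (cmp x y) z = cmp x (cmp y z)) \<and>
     (\<forall>x\<in>Mor. \<forall>i\<ge>N. deg x i = 0) \<and>
     (\<forall>v\<in>V. deg v = (\<lambda>_. 0)) \<and>
     (\<forall>x\<in>Mor. \<forall>y\<in>Mor. src x = rng y \<longrightarrow> deg (cmp x y) = (\<lambda>i. deg x i + deg y i)) \<and>
     (\<forall>x\<in>Mor. \<forall>m n. deg x = (\<lambda>i. m i + n i) \<longrightarrow>
        (\<exists>!p. fst p \<in> Mor \<and> snd p \<in> Mor \<and> src (fst p) = rng (snd p) \<and>
              x = cmp (fst p) (snd p) \<and> deg (fst p) = m \<and> deg (snd p) = n))"

text \<open>Since every morphism
  factors uniquely into edges (morphisms of degree e_i), this is the same as labeling each edge
  of colour i by some delta i k, extending multiplicatively to paths, compatibly with the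
  equivalence on paths; vertices get the empty label.\<close>
definition labeled_higher_rank_graph ::
  "nat \<Rightarrow> nat \<Rightarrow> 'a set \<Rightarrow> 'a set \<Rightarrow> ('a \<Rightarrow> 'a) \<Rightarrow> ('a \<Rightarrow> 'a) \<Rightarrow> ('a \<Rightarrow> 'a \<Rightarrow> 'a)
     \<Rightarrow> ('a \<Rightarrow> nat \<Rightarrow> nat) \<Rightarrow> ('a \<Rightarrow> tword) \<Rightarrow> bool" where
  "labeled_higher_rank_graph d N Mor V src rng cmp deg lab \<longleftrightarrow>
     higher_rank_graph N Mor V src rng cmp deg \<and>
     (\<forall>x\<in>Mor. lab x \<in> tuples d N \<and> tlen (lab x) = deg x) \<and>
     (\<forall>x\<in>Mor. \<forall>y\<in>Mor. src x = rng y \<longrightarrow> lab (cmp x y) = tmul (lab x) (lab y))"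

end

theory Submission
  imports Defs
begin


lemma tmul_assoc: "tmul (tmul a b) c = tmul a (tmul b c)"
  by (simp add: tmul_def)

lemma tmul_tempty[simp]: "tmul tempty a = a" "tmul a tempty = a"
  by (simp_all add: tmul_def tempty_def)

lemma tmul_tuples: "a \<in> tuples d N \<Longrightarrow> b \<in> tuples d N \<Longrightarrow> tmul a b \<in> tuples d N"
  by (auto simp: tuples_def tmul_def)

lemma tmul_tuplesD: "tmul a b \<in> tuples d N \<Longrightarrow> a \<in> tuples d N \<and> b \<in> tuples d N"
  by (auto simp: tuples_def tmul_def)

lemma tempty_tuples: "tempty \<in> tuples d N"
  by (simp add: tuples_def tempty_def)

lemma delta_tuples: "i < N \<Longrightarrow> k \<in> {1..d} \<Longrightarrow> delta i k \<in> tuples d N"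
  by (auto simp: tuples_def delta_def)

lemma fclass_eq: "follower d N L \<mu> = follower d N L \<nu> \<Longrightarrow> fclass d N L \<mu> = fclass d N L \<nu>"
  by (simp add: fclass_def sim_def)

lemma self_fclass: "\<mu> \<in> L \<Longrightarrow> \<mu> \<in> fclass d N L \<mu>"
  by (simp add: fclass_def sim_def)

lemma follower_delta:
  assumes "follower d N L \<mu> = follower d N L \<mu>'" "i < N" "k \<in> {1..d}"
  shows "follower d N L (tmul (delta i k) \<mu>) = follower d N L (tmul (delta i k) \<mu>')"
proof -
  have D: "delta i k \<in> tuples d N" using assms delta_tuples by blast
  have "w \<in> follower d N L (tmul (delta i k) x) \<longleftrightarrow> w \<in> tuples d N \<and> tmul w (delta i k) \<in> follower d N L x" for w x
    using D tmul_tuples[of w d N "delta i k"] by (auto simp: follower_def tmul_assoc)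
  then show ?thesis using assms(1) by blast
qed

lemma edge_step:
  assumes FL: "factorial_language d N L" and e: "fsg_edge d N L e" and mu: "\<mu> \<in> L"
    and s: "esrc e = fclass d N L \<mu>"
  shows "tmul (elabel e) \<mu> \<in> L \<and> erng e = fclass d N L (tmul (elabel e) \<mu>)"
proof -
  obtain R i k S where eq: "e = (R, i, k, S)" by (cases e) auto
  from e eq obtain \<mu>' where i: "i < N" and k: "k \<in> {1..d}" and m': "\<mu>' \<in> L"
    and S: "S = fclass d N L \<mu>'" and dm: "tmul (delta i k) \<mu>' \<in> L"
    and R: "R = fclass d N L (tmul (delta i k) \<mu>')"
    by (auto simp: fsg_edge_def)
  have "\<mu> \<in> fclass d N L \<mu>'" using s S eq self_fclass[OF mu] by (simp add: esrc_def)
  hence F: "follower d N L \<mu> = follower d N L \<mu>'" by (simp add: fclass_def sim_def)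
  have "delta i k \<in> follower d N L \<mu>'" using dm delta_tuples[OF i k] by (simp add: follower_def)
  hence "tmul (delta i k) \<mu> \<in> L" using F by (auto simp: follower_def)
  moreover have "R = fclass d N L (tmul (delta i k) \<mu>)"
    using R fclass_eq[OF follower_delta[OF F i k]] by simp
  ultimately show ?thesis using eq by (simp add: elabel_def erng_def)
qed

lemma path_sound:
  assumes FL: "factorial_language d N L"
  shows "fsg_path d N L es \<Longrightarrow> \<mu> \<in> L \<Longrightarrow> (es \<noteq> [] \<longrightarrow> esrc (last es) = fclass d N L \<mu>) \<Longrightarrow>
     tmul (path_label es) \<mu> \<in> L \<and> (es \<noteq> [] \<longrightarrow> erng (hd es) = fclass d N L (tmul (path_label es) \<mu>))"
proof (induction es)
  case Nil
  then show ?case by (simp add: path_label_def)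
next
  case (Cons e es)
  have pe: "fsg_edge d N L e" using Cons.prems by (simp add: fsg_path_def)
  show ?case
  proof (cases "es = []")
    case True
    then show ?thesis using edge_step[OF FL pe Cons.prems(2)] Cons.prems(3)
      by (simp add: path_label_def)
  next
    case False
    have pes: "fsg_path d N L es" using Cons.prems(1) False
      by (auto simp: fsg_path_def successively_Cons)
    from Cons.IH[OF pes Cons.prems(2)] Cons.prems(3) False
    have A: "tmul (path_label es) \<mu> \<in> L" "erng (hd es) = fclass d N L (tmul (path_label es) \<mu>)"
      by auto
    have "esrc e = erng (hd es)" using Cons.prems(1) False
      by (cases es) (auto simp: fsg_path_def)
    with A edge_step[OF FL pe A(1)] show ?thesis
      by (simp add: path_label_def tmul_assoc)
  qed
qed

lemma path_in_L:
  assumes FL: "factorial_language d N L" and p: "fsg_path d N L es" and ne: "es \<noteq> []"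
  shows "path_label es \<in> L"
proof -
  have "fsg_edge d N L (last es)" using p ne by (simp add: fsg_path_def)
  then obtain \<mu> where mu: "\<mu> \<in> L" and s: "esrc (last es) = fclass d N L \<mu>"
    by (cases "last es") (auto simp: fsg_edge_def esrc_def)
  have Lt: "L \<subseteq> tuples d N" using FL by (simp add: factorial_language_def)
  have inL: "tmul (path_label es) \<mu> \<in> L" using path_sound[OF FL p mu] s by simp
  hence "path_label es \<in> tuples d N" using Lt tmul_tuplesD by blast
  moreover have "subword d N (path_label es) (tmul (path_label es) \<mu>)"
    unfolding subword_def using tempty_tuples mu Lt by (intro bexI[of _ tempty] bexI[of _ \<mu>]) auto
  ultimately show ?thesis using FL inL by (auto simp: factorial_language_def)
qed



definition tsize :: "nat \<Rightarrow> tword \<Rightarrow> nat" where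
  "tsize N \<mu> = (\<Sum>i<N. length (\<mu> i))"

lemma tsize_delta:
  assumes "i < N"
  shows "tsize N (tmul (delta i k) \<nu>) = Suc (tsize N \<nu>)"
proof -
  have "tsize N (tmul (delta i k) \<nu>) = (\<Sum>j<N. (if j = i then 1 else 0) + length (\<nu> j))"
    by (auto simp: tsize_def tmul_def delta_def intro!: sum.cong)
  also have "\<dots> = (\<Sum>j<N. (if j = i then 1 else 0::nat)) + tsize N \<nu>"
    by (simp add: sum.distrib tsize_def)
  also have "(\<Sum>j<N. (if j = i then 1 else 0::nat)) = 1" using assms by (simp add: sum.delta)
  finally show ?thesis by simp
qed

lemma decomp:
  assumes FL: "factorial_language d N L" and mu: "\<mu> \<in> L" and ne: "\<mu> \<noteq> tempty"
  shows "\<exists>i k \<nu>. i < N \<and> k \<in> {1..d} \<and> \<nu> \<in> L \<and> \<mu> = tmul (delta i k) \<nu>"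
proof -
  have T: "\<mu> \<in> tuples d N" using FL mu by (auto simp: factorial_language_def)
  obtain i where mi: "\<mu> i \<noteq> []" using ne by (auto simp: tempty_def)
  have i: "i < N" using T mi by (auto simp: tuples_def) (meson not_le)
  obtain k r where kr: "\<mu> i = k # r" using mi by (cases "\<mu> i") auto
  have k: "k \<in> {1..d}" using T i kr by (auto simp: tuples_def)
  define \<nu> where "\<nu> = \<mu>(i := r)"
  have eq: "\<mu> = tmul (delta i k) \<nu>" using kr by (auto simp: tmul_def delta_def \<nu>_def)
  have nT: "\<nu> \<in> tuples d N" using T kr by (auto simp: tuples_def \<nu>_def dest!: spec[of _ i] simp del: atLeastAtMost_iff)
  have "subword d N \<nu> \<mu>" unfolding subword_def using delta_tuples[OF i k] tempty_tuples eq
    by (intro bexI[of _ "delta i k"] bexI[of _ tempty]) auto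
  hence "\<nu> \<in> L" using FL mu nT by (auto simp: factorial_language_def)
  thus ?thesis using i k eq by blast
qed

lemma path_complete:
  assumes FL: "factorial_language d N L"
  shows "\<forall>\<mu>. \<mu> \<in> L \<longrightarrow> tsize N \<mu> = n \<longrightarrow> \<mu> \<noteq> tempty \<longrightarrow>
     (\<exists>es. es \<noteq> [] \<and> fsg_path d N L es \<and> path_label es = \<mu> \<and> erng (hd es) = fclass d N L \<mu>)"
proof (induction n)
  case 0
  show ?case
  proof (intro allI impI)
    fix \<mu> assume m: "\<mu> \<in> L" "tsize N \<mu> = 0" "\<mu> \<noteq> tempty"
    obtain i k \<nu> where "i < N" "\<mu> = tmul (delta i k) \<nu>" using decomp[OF FL m(1,3)] by blast
    with m(2) tsize_delta show "\<exists>es. es \<noteq> [] \<and> fsg_path d N L es \<and> path_label es = \<mu> \<and> erng (hd es) = fclass d N L \<mu>" by simp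
  qed
next
  case (Suc n)
  show ?case
  proof (intro allI impI)
    fix \<mu> assume m: "\<mu> \<in> L" "tsize N \<mu> = Suc n" "\<mu> \<noteq> tempty"
    obtain i k \<nu> where i: "i < N" and k: "k \<in> {1..d}" and nu: "\<nu> \<in> L"
      and eq: "\<mu> = tmul (delta i k) \<nu>" using decomp[OF FL m(1,3)] by blast
    define e where "e = (fclass d N L \<mu>, i, k, fclass d N L \<nu>)"
    have E: "fsg_edge d N L e" unfolding e_def fsg_edge_def using i k nu eq m(1) by auto
    show "\<exists>es. es \<noteq> [] \<and> fsg_path d N L es \<and> path_label es = \<mu> \<and> erng (hd es) = fclass d N L \<mu>"
    proof (cases "\<nu> = tempty")
      case True
      show ?thesis
      proof (rule exI[of _ "[e]"], intro conjI)
        show "fsg_path d N L [e]" using E by (simp add: fsg_path_def)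
      qed (simp_all add: path_label_def elabel_def e_def erng_def eq True)
    next
      case False
      have "tsize N \<nu> = n" using m(2) eq tsize_delta[OF i] by simp
      then obtain es where es: "es \<noteq> []" "fsg_path d N L es" "path_label es = \<nu>"
        "erng (hd es) = fclass d N L \<nu>" using Suc.IH nu False by blast
      have "fsg_path d N L (e # es)" using es E
        by (cases es) (auto simp: fsg_path_def esrc_def e_def)
      moreover have "path_label (e # es) = \<mu>"
        using es(3) eq by (simp add: path_label_def elabel_def e_def)
      ultimately show ?thesis by (intro exI[of _ "e # es"]) (simp add: e_def erng_def)
    qed
  qed
qed

lemma part1:
  assumes FL: "factorial_language d N L"
  shows "L = fsg_labeled_path_space d N L"
proof
  show "fsg_labeled_path_space d N L \<subseteq> L"
  proof
    fix x assume "x \<in> fsg_labeled_path_space d N L"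
    then consider es where "x = path_label es" "es \<noteq> []" "fsg_path d N L es"
      | \<mu> where "\<mu> \<in> L" "x = tempty"
      by (auto simp: fsg_labeled_path_space_def Omega_def)
    then show "x \<in> L"
    proof cases
      case 1 then show ?thesis using path_in_L[OF FL] by blast
    next
      case 2
      have "tempty \<in> tuples d N" by (rule tempty_tuples)
      moreover have "subword d N tempty \<mu>" unfolding subword_def
        using 2 FL tempty_tuples by (intro bexI[of _ tempty] bexI[of _ \<mu>]) (auto simp: factorial_language_def)
      ultimately show ?thesis using 2 FL by (auto simp: factorial_language_def)
    qed
  qed
next
  show "L \<subseteq> fsg_labeled_path_space d N L"
  proof
    fix \<mu> assume m: "\<mu> \<in> L"
    show "\<mu> \<in> fsg_labeled_path_space d N L"
    proof (cases "\<mu> = tempty")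
      case True
      then show ?thesis using m by (auto simp: fsg_labeled_path_space_def Omega_def)
    next
      case False
      then obtain es where "es \<noteq> []" "fsg_path d N L es" "path_label es = \<mu>"
        using path_complete[OF FL] m by blast
      then show ?thesis by (auto simp: fsg_labeled_path_space_def)
    qed
  qed
qed



lemma follower_graph:
  assumes G: "labeled_higher_rank_graph d N Mor V src rng cmp deg lab"
  shows "follower d N (lab ` Mor) \<mu> =
     (\<Union>v\<in>rng ` {z\<in>Mor. lab z = \<mu>}. {lab y | y. y \<in> Mor \<and> src y = v})"
proof (intro set_eqI iffI)
  fix w assume "w \<in> follower d N (lab ` Mor) \<mu>"
  then obtain x where w: "w \<in> tuples d N" and x: "x \<in> Mor" and lx: "lab x = tmul w \<mu>"
    by (auto simp: follower_def)
  have H: "higher_rank_graph N Mor V src rng cmp deg" using G by (simp add: labeled_higher_rank_graph_def)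
  have "deg x = tlen (lab x)" using G x by (simp add: labeled_higher_rank_graph_def)
  hence dx: "deg x = (\<lambda>i. tlen w i + tlen \<mu> i)" using lx by (simp add: tlen_def tmul_def)
  have UF: "\<forall>x\<in>Mor. \<forall>m n. deg x = (\<lambda>i. m i + n i) \<longrightarrow>
        (\<exists>!p. fst p \<in> Mor \<and> snd p \<in> Mor \<and> src (fst p) = rng (snd p) \<and>
              x = cmp (fst p) (snd p) \<and> deg (fst p) = m \<and> deg (snd p) = n)"
    using H unfolding higher_rank_graph_def by blast
  from UF[rule_format, OF x dx] obtain p where p: "fst p \<in> Mor" "snd p \<in> Mor" "src (fst p) = rng (snd p)"
    "x = cmp (fst p) (snd p)" "deg (fst p) = tlen w" "deg (snd p) = tlen \<mu>"
    by blast
  define y z where "y = fst p" and "z = snd p"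
  have lab_ok: "\<forall>x\<in>Mor. lab x \<in> tuples d N \<and> tlen (lab x) = deg x"
    and lab_cmp: "\<forall>x\<in>Mor. \<forall>y\<in>Mor. src x = rng y \<longrightarrow> lab (cmp x y) = tmul (lab x) (lab y)"
    using G unfolding labeled_higher_rank_graph_def by blast+
  have ly: "tlen (lab y) = tlen w" using lab_ok p(1,5) unfolding y_def by simp
  have lxy: "lab x = tmul (lab y) (lab z)" using lab_cmp p(1-4) unfolding y_def z_def by simp
  have "lab y = w \<and> lab z = \<mu>"
  proof -
    have "lab y i = w i \<and> lab z i = \<mu> i" for i
    proof -
      have "lab y i @ lab z i = w i @ \<mu> i" using lxy lx unfolding tmul_def by metis
      moreover have "length (lab y i) = length (w i)" using ly unfolding tlen_def by metis
      ultimately show ?thesis by simp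
    qed
    thus ?thesis by auto
  qed
  thus "w \<in> (\<Union>v\<in>rng ` {z\<in>Mor. lab z = \<mu>}. {lab y | y. y \<in> Mor \<and> src y = v})"
    using p unfolding y_def z_def by blast
next
  fix w assume "w \<in> (\<Union>v\<in>rng ` {z\<in>Mor. lab z = \<mu>}. {lab y | y. y \<in> Mor \<and> src y = v})"
  then obtain y z where yz: "y \<in> Mor" "z \<in> Mor" "lab z = \<mu>" "src y = rng z" "w = lab y" by blast
  have H: "higher_rank_graph N Mor V src rng cmp deg" using G by (simp add: labeled_higher_rank_graph_def)
  have "cmp y z \<in> Mor" using H yz by (simp add: higher_rank_graph_def)
  moreover have "lab (cmp y z) = tmul w \<mu>" using G yz by (simp add: labeled_higher_rank_graph_def)
  moreover have "w \<in> tuples d N" using G yz by (simp add: labeled_higher_rank_graph_def)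
  ultimately show "w \<in> follower d N (lab ` Mor) \<mu>" by (force simp: follower_def)
qed


lemma finite_followers:
  assumes G: "labeled_higher_rank_graph d N Mor V src rng cmp deg lab" and V: "finite V"
  shows "finite (range (follower d N (lab ` Mor)))"
proof -
  have H: "higher_rank_graph N Mor V src rng cmp deg" using G unfolding labeled_higher_rank_graph_def by (rule conjunct1)
  let ?F = "\<lambda>S. (\<Union>v\<in>S. {lab y | y. y \<in> Mor \<and> src y = v})"
  have "range (follower d N (lab ` Mor)) \<subseteq> ?F ` Pow V"
  proof
    fix A assume "A \<in> range (follower d N (lab ` Mor))"
    then obtain \<mu> where "A = follower d N (lab ` Mor) \<mu>" by blast
    moreover have PV: "rng ` {z\<in>Mor. lab z = \<mu>} \<in> Pow V"
    proof -
      have "\<forall>x\<in>Mor. src x \<in> V \<and> rng x \<in> V" using H unfolding higher_rank_graph_def by (elim conjE) assumption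
      thus ?thesis by blast
    qed
    moreover have AF: "A = ?F (rng ` {z\<in>Mor. lab z = \<mu>})" using follower_graph[OF G, of \<mu>] calculation(1) by simp
    show "A \<in> ?F ` Pow V" by (rule rev_image_eqI[where f="?F", OF PV AF])
  qed
  thus ?thesis by (rule finite_subset) (intro finite_imageI finite_Pow_iff[THEN iffD2] V)
qed



lemma sofic_of_finite:
  assumes fin: "finite (range (follower d N L))"
  shows "sofic d N L"
proof -
  let ?FS = "range (follower d N L)"
  let ?P = "{p \<in> ?FS \<times> ?FS. fst p \<noteq> snd p}"
  have finP: "finite ?P" using fin by simp
  define wit where "wit p = (SOME w. w \<in> (fst p - snd p) \<union> (snd p - fst p))" for p :: "tword set \<times> tword set"
  have witP: "wit p \<in> (fst p - snd p) \<union> (snd p - fst p)" if "p \<in> ?P" for p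
  proof -
    have "(fst p - snd p) \<union> (snd p - fst p) \<noteq> {}" using that by (auto simp: prod_eq_iff)
    thus ?thesis unfolding wit_def by (simp only: some_in_eq) simp
  qed
  define m where "m i = Max (insert 0 ((\<lambda>p. tlen (wit p) i) ` ?P))" for i
  have mge: "tlen (wit p) i \<le> m i" if "p \<in> ?P" for p i
    unfolding m_def
  proof (rule Max_ge)
    show "finite (insert 0 ((\<lambda>p. tlen (wit p) i) ` ?P))" using finP by (intro finite.insertI finite_imageI)
    show "tlen (wit p) i \<in> insert 0 ((\<lambda>p. tlen (wit p) i) ` ?P)" using that by (intro insertI2 imageI)
  qed
  show ?thesis unfolding sofic_def
  proof (intro exI[of _ m] allI impI ballI)
    fix n \<mu> \<nu> assume n: "\<forall>i<N. m i \<le> n i" and mu: "\<mu> \<in> L" and nu: "\<nu> \<in> L"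
    show "sim_n d N L n \<mu> \<nu> = sim d N L \<mu> \<nu>"
    proof
      assume "sim d N L \<mu> \<nu>" thus "sim_n d N L n \<mu> \<nu>"
        unfolding sim_def sim_n_def follower_def follower_n_def by blast
    next
      assume sn: "sim_n d N L n \<mu> \<nu>"
      show "sim d N L \<mu> \<nu>"
      proof (rule ccontr)
        assume ns: "\<not> sim d N L \<mu> \<nu>"
        define p where "p = (follower d N L \<mu>, follower d N L \<nu>)"
        have "fst p \<noteq> snd p" using ns by (simp add: p_def sim_def)
        moreover have "p \<in> ?FS \<times> ?FS" unfolding p_def by (intro mem_Sigma_iff[THEN iffD2] conjI rangeI)
        ultimately have pP: "p \<in> ?P" by blast
        let ?w = "wit p"
        have len: "\<forall>i<N. tlen ?w i \<le> n i" using mge[OF pP] n order_trans by blast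
        have "?w \<in> follower d N L \<mu> \<longleftrightarrow> ?w \<in> follower_n d N L n \<mu>"
             "?w \<in> follower d N L \<nu> \<longleftrightarrow> ?w \<in> follower_n d N L n \<nu>"
          using len by (auto simp: follower_def follower_n_def)
        moreover have "follower_n d N L n \<mu> = follower_n d N L n \<nu>" using sn by (simp add: sim_n_def)
        ultimately show False using witP[OF pP] unfolding p_def by auto
      qed
    qed
  qed
qed

theorem proposition9p7:
  fixes d N :: nat and L :: "tword set"
  assumes "factorial_language d N L"
  shows "(sofic d N L \<longrightarrow> L = fsg_labeled_path_space d N L) \<and>
         (\<forall>(Mor :: 'a set) V src rng cmp deg lab.
            labeled_higher_rank_graph d N Mor V src rng cmp deg lab \<and> finite V \<and>
            L = lab ` Mor \<longrightarrow> sofic d N L)"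
proof (intro conjI impI allI)
  show "L = fsg_labeled_path_space d N L" by (rule part1[OF assms])
next
  fix Mor :: "'a set" and V src rng cmp deg lab
  assume A: "labeled_higher_rank_graph d N Mor V src rng cmp deg lab \<and> finite V \<and> L = lab ` Mor"
  have "finite (range (follower d N (lab ` Mor)))"
    by (rule finite_followers[of d N Mor V src rng cmp deg lab]) (use A in \<open>simp_all\<close>)
  hence "sofic d N (lab ` Mor)" by (rule sofic_of_finite)
  thus "sofic d N L" using A by simp
qed

end
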